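(* Let $X$ be a compact metric space containing a free topological $n$-ball with $n\ge 2$. Then there exists a homeomorphism $f$ of $X$ onto itself and a point $x\in X$ such that $\omega_f(x)$ is infinite and consists of fixed points of $f$. In particular, $X$ does not have the $\omega$-FTP property.
   Context: $B_n=\{x\in\mathbb{R}^n:\|x\|\le1\}$ with Euclidean norm, $\mathrm{int}(B_n)=\{\|x\|<1\}$. A topological $n$-ball is a space homeomorphic to $B_n$; a topological $n$-ball $B\subset X$ is free in $X$ if $h(\mathrm{int}(B_n))$ is open in $X$ for a homeomorphism $h:B_n\to B$. For continuous $f:X\to X$, $\omega_f(x)=\{y:\ \exists\, n_i\to+\infty,\ f^{n_i}(x)\to y\}$, totally periodic if all its points are periodic. $X$ has the $\omega$-FTP property if for every continuous $f:X\to X$, every totally periodic $\omega$-limit set is finite. *)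

theory Defs
  imports "HOL-Analysis.Analysis"
begin

definition omega_limit :: "('a::topological_space \<Rightarrow> 'a) \<Rightarrow> 'a \<Rightarrow> 'a set" where
  "omega_limit f x = {y. \<exists>r::nat \<Rightarrow> nat. filterlim r at_top sequentially \<and>
                          ((\<lambda>i. (f ^^ r i) x) \<longlonglongrightarrow> y)}"

definition periodic_point :: "('a \<Rightarrow> 'a) \<Rightarrow> 'a \<Rightarrow> bool" where
  "periodic_point f y \<longleftrightarrow> (\<exists>n>0. (f ^^ n) y = y)"

definition totally_periodic :: "('a \<Rightarrow> 'a) \<Rightarrow> 'a set \<Rightarrow> bool" where
  "totally_periodic f S \<longleftrightarrow> (\<forall>y\<in>S. periodic_point f y)"

definition omega_FTP :: "'a::topological_space set \<Rightarrow> bool" where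
  "omega_FTP X \<longleftrightarrow> (\<forall>f. continuous_on X f \<and> f ` X \<subseteq> X \<longrightarrow>
       (\<forall>x\<in>X. totally_periodic f (omega_limit f x) \<longrightarrow> finite (omega_limit f x)))"

definition free_ball :: "'a::topological_space set \<Rightarrow> 'a set \<Rightarrow> (real^'n \<Rightarrow> 'a) \<Rightarrow> bool" where
  "free_ball X B h \<longleftrightarrow> B \<subseteq> X \<and> (\<exists>k. homeomorphism (cball 0 1) B h k) \<and>
       openin (top_of_set X) (h ` ball 0 1)"

end

theory Submission
  imports Defs
begin


lemma sum_split2:
  fixes f :: "'n::finite \<Rightarrow> real"
  assumes "i \<noteq> j"
  shows "sum f UNIV = f i + f j + sum f (UNIV - {i, j})"
proof -
  have "sum f UNIV = f i + sum f (UNIV - {i})" by (simp add: sum.remove)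
  also have "sum f (UNIV - {i}) = f j + sum f (UNIV - {i} - {j})"
    using assms by (intro sum.remove) auto
  also have "UNIV - {i} - {j} = UNIV - {i, j}" by auto
  finally show ?thesis by simp
qed

definition rot :: "'n::finite \<Rightarrow> 'n \<Rightarrow> real \<Rightarrow> real^'n \<Rightarrow> real^'n" where
  "rot i j t v = (\<chi> k. if k = i then cos t * v$i - sin t * v$j
                      else if k = j then sin t * v$i + cos t * v$j else v$k)"

definition PP :: "'n::finite \<Rightarrow> 'n \<Rightarrow> real \<Rightarrow> real \<Rightarrow> real^'n" where
  "PP i j r s = (\<chi> k. if k = i then r * cos s else if k = j then r * sin s else 0)"

lemma norm_rot:
  assumes "i \<noteq> j" shows "norm (rot i j t v) = norm v"
proof -
  have "inner (rot i j t v) (rot i j t v) = inner v v"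
  proof -
    have "inner (rot i j t v) (rot i j t v) = (\<Sum>k\<in>UNIV. (rot i j t v)$k * (rot i j t v)$k)"
      by (simp add: inner_vec_def)
    also have "\<dots> = (cos t * v$i - sin t * v$j)^2 + (sin t * v$i + cos t * v$j)^2
        + (\<Sum>k\<in>UNIV - {i,j}. v$k * v$k)"
      using assms by (subst sum_split2[OF assms]) (auto simp: rot_def power2_eq_square intro!: sum.cong)
    also have "(cos t * v$i - sin t * v$j)^2 + (sin t * v$i + cos t * v$j)^2
             = ((sin t)^2 + (cos t)^2) * ((v$i)^2 + (v$j)^2)" by algebra
    also have "\<dots> = v$i * v$i + v$j * v$j" by (simp add: power2_eq_square[symmetric])
    also have "v$i * v$i + v$j * v$j + (\<Sum>k\<in>UNIV - {i,j}. v$k * v$k) = (\<Sum>k\<in>UNIV. v$k * v$k)"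
      by (subst sum_split2[OF assms]) simp
    finally show ?thesis by (simp add: inner_vec_def)
  qed
  then show ?thesis by (simp add: norm_eq_sqrt_inner)
qed

lemma norm_PP:
  assumes "i \<noteq> j" shows "norm (PP i j r s) = \<bar>r\<bar>"
proof -
  have "inner (PP i j r s) (PP i j r s) = (r * cos s)^2 + (r * sin s)^2"
    using assms by (simp add: inner_vec_def sum_split2[OF assms] PP_def assms power2_eq_square not_sym)
  also have "\<dots> = r^2 * ((sin s)^2 + (cos s)^2)" by algebra
  also have "\<dots> = r^2" by simp
  finally show ?thesis by (simp add: norm_eq_sqrt_inner)
qed

lemma rot_rot: "i \<noteq> j \<Longrightarrow> rot i j a (rot i j b v) = rot i j (a + b) v"
  by (auto simp: rot_def vec_eq_iff cos_add sin_add algebra_simps)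

lemma rot_0[simp]: "rot i j 0 v = v"
  by (auto simp: rot_def vec_eq_iff)

lemma rot_PP: "i \<noteq> j \<Longrightarrow> rot i j a (PP i j r s) = PP i j r (s + a)"
  by (auto simp: rot_def PP_def vec_eq_iff cos_add sin_add algebra_simps)

lemma continuous_rot[continuous_intros]:
  fixes S :: "'b::t2_space set"
  assumes "continuous_on S t" "continuous_on S v"
  shows "continuous_on S (\<lambda>x. rot i j (t x) (v x))"
  unfolding rot_def
  apply (intro continuous_on_vec_lambda)
  subgoal for k by (cases "k = i"; cases "k = j"; auto intro!: continuous_intros assms)
  done

definition qq :: "real \<Rightarrow> real" where "qq r = 1 + (1 - r)^2"
definition hh :: "real \<Rightarrow> real" where "hh r = r * qq r"
definition Psi :: "real^'n::finite \<Rightarrow> real^'n" where "Psi v = qq (norm v) *\<^sub>R v"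
definition fB :: "'n::finite \<Rightarrow> 'n \<Rightarrow> real^'n \<Rightarrow> real^'n" where
  "fB i j v = rot i j (1 - norm (Psi v)) (Psi v)"

lemma qq_pos: "qq r > 0"
  unfolding qq_def by (simp add: add_pos_nonneg)

lemma norm_Psi: "norm (Psi v) = hh (norm v)"
  using qq_pos[of "norm v"] by (simp add: Psi_def hh_def)

lemma hh_bounds: "0 \<le> r \<Longrightarrow> r \<le> 1 \<Longrightarrow> 0 \<le> hh r \<and> hh r \<le> 1"
proof -
  assume r: "0 \<le> r" "r \<le> 1"
  have "1 - hh r = (1-r)*(1 - r*(1-r))" unfolding hh_def qq_def by algebra
  moreover have "r*(1-r) \<le> 1" using r by (intro mult_le_one) auto
  ultimately have "1 - hh r \<ge> 0" using r by simp
  moreover have "hh r \<ge> 0" unfolding hh_def using r qq_pos[of r] by simp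
  ultimately show ?thesis by simp
qed

lemma hh_inj: "0 \<le> a \<Longrightarrow> a \<le> 1 \<Longrightarrow> 0 \<le> b \<Longrightarrow> b \<le> 1 \<Longrightarrow> hh a = hh b \<Longrightarrow> a = b"
proof -
  assume a: "0 \<le> a" "a \<le> 1" "0 \<le> b" "b \<le> 1" "hh a = hh b"
  have e: "hh a - hh b = (a - b) * (2 - 2*(a+b) + a^2 + a*b + b^2)"
    unfolding hh_def qq_def by algebra
  have k: "4*(2 - 2*(a+b) + a^2 + a*b + b^2) = (a-b)^2 + 3*((a+b)-4/3)^2 + 8/3"
    by (simp add: power2_eq_square field_simps)
  have "0 < (a-b)^2 + 3*((a+b)-4/3)^2 + 8/3" by (intro add_nonneg_pos add_nonneg_nonneg) auto
  then have "0 < 4*(2 - 2*(a+b) + a^2 + a*b + b^2)" unfolding k .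
  then have "2 - 2*(a+b) + a^2 + a*b + b^2 > 0" by simp
  with e a(5) show "a = b" by simp
qed

lemma hh_0[simp]: "hh 0 = 0" and hh_1[simp]: "hh 1 = 1" and qq_1[simp]: "qq 1 = 1"
  by (auto simp: hh_def qq_def)

lemma norm_fB: "i \<noteq> j \<Longrightarrow> norm (fB i j v) = hh (norm v)"
  by (simp add: fB_def norm_rot norm_Psi)

lemma fB_fix: "norm v = 1 \<Longrightarrow> fB i j v = v"
  by (simp add: fB_def Psi_def)

lemma continuous_fB: "continuous_on S (fB i j)"
  unfolding fB_def Psi_def qq_def
  by (intro continuous_intros)

lemma Psi_PP: "0 \<le> r \<Longrightarrow> i \<noteq> j \<Longrightarrow> Psi (PP i j r s) = PP i j (hh r) s"
proof -
  assume a: "0 \<le> r" "i \<noteq> j"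
  have n: "norm (PP i j r s) = r" using a by (simp add: norm_PP)
  show ?thesis unfolding Psi_def n by (auto simp: hh_def PP_def vec_eq_iff)
qed

lemma fB_PP: "0 \<le> r \<Longrightarrow> r \<le> 1 \<Longrightarrow> i \<noteq> j \<Longrightarrow> fB i j (PP i j r s) = PP i j (hh r) (s + (1 - hh r))"
  using hh_bounds[of r]
  by (simp add: fB_def Psi_PP norm_PP rot_PP)

lemma fB_inj: fixes i j :: "'n::finite" assumes "i \<noteq> j" shows "inj_on (fB i j) (cball 0 1)"
proof
  fix v w :: "real^'n" assume v: "v \<in> cball 0 1" and w: "w \<in> cball 0 1" and e: "fB i j v = fB i j w"
  have "hh (norm v) = hh (norm w)" using arg_cong[OF e, of norm] unfolding norm_fB[OF assms] .
  hence n: "norm v = norm w" using hh_inj[of "norm v" "norm w"] v w by (auto simp: mem_cball_0)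
  hence n2: "norm (Psi v) = norm (Psi w)" by (simp add: norm_Psi)
  have "Psi v = rot i j (-(1 - norm (Psi v))) (fB i j v)"
    using assms unfolding fB_def rot_rot[OF assms] by simp
  also have "\<dots> = rot i j (-(1 - norm (Psi w))) (fB i j w)" unfolding e n2 ..
  also have "\<dots> = Psi w"
    using assms unfolding fB_def rot_rot[OF assms] by simp
  finally have "qq (norm v) *\<^sub>R v = qq (norm v) *\<^sub>R w" using n by (simp add: Psi_def)
  then show "v = w" using qq_pos[of "norm v"] by simp
qed

lemma fB_image: fixes i j :: "'n::finite" assumes "i \<noteq> j" shows "fB i j ` cball 0 1 = cball 0 1"
proof
  show "fB i j ` cball 0 1 \<subseteq> cball 0 1"
  proof
    fix y assume "y \<in> fB i j ` cball 0 1"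
    then obtain v where v: "v \<in> cball 0 1" "y = fB i j v" by auto
    have "norm y = hh (norm v)" using v norm_fB[OF assms] by simp
    then show "y \<in> cball 0 1" using hh_bounds[of "norm v"] v by (simp add: mem_cball_0)
  qed
next
  show "cball 0 1 \<subseteq> fB i j ` cball 0 1"
  proof
    fix w :: "real^'n" assume w: "w \<in> cball 0 1"
    define s where "s = norm w"
    define w' where "w' = rot i j (-(1 - s)) w"
    have nw': "norm w' = s" using assms by (simp add: w'_def norm_rot s_def)
    have s01: "0 \<le> s" "s \<le> 1" using w by (auto simp: s_def mem_cball_0)
    obtain v where v: "v \<in> cball 0 1" "Psi v = w'"
    proof (cases "s = 0")
      case True
      then have "w' = 0" using nw' by simp
      then show ?thesis using that[of 0] by (simp add: Psi_def)
    next
      case False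
      have "continuous_on {0..1} hh" unfolding hh_def qq_def by (intro continuous_intros)
      then obtain r where r: "0 \<le> r" "r \<le> 1" "hh r = s"
        using IVT'[of hh 0 s 1] s01 by auto
      define v where "v = (r / s) *\<^sub>R w'"
      have nv: "norm v = r" using False s01 r nw' by (simp add: v_def)
      have "Psi v = (qq r * (r / s)) *\<^sub>R w'" unfolding Psi_def nv by (simp add: v_def)
      also have "qq r * (r / s) = 1" using r False by (simp add: hh_def mult.commute)
      finally show ?thesis using that[of v] nv r by (simp add: mem_cball_0)
    qed
    have "fB i j v = rot i j (1 - s) w'" using v nw' by (simp add: fB_def)
    also have "\<dots> = w" using assms by (simp add: w'_def rot_rot)
    finally show "w \<in> fB i j ` cball 0 1" using v by (metis image_eqI)
  qed
qed



primrec rr :: "nat \<Rightarrow> real" where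
  "rr 0 = 1/2" | "rr (Suc n) = hh (rr n)"

primrec SS :: "nat \<Rightarrow> real" where
  "SS 0 = 0" | "SS (Suc n) = SS n + (1 - rr (Suc n))"

lemma u_step: "1 - hh (1 - u) = u - (1 - u) * u^2"
  unfolding hh_def qq_def by algebra

lemma g_mono: "0 \<le> a \<Longrightarrow> a \<le> u \<Longrightarrow> u + a \<le> 1 \<Longrightarrow> a - a^2 + a^3 \<le> u - (u::real)^2 + u^3"
proof -
  assume h: "0 \<le> a" "a \<le> u" "u + a \<le> 1"
  have "u - u^2 + u^3 - (a - a^2 + a^3) = (u - a) * ((1 - u - a) + (u^2 + u*a + a^2))" by algebra
  moreover have "(u - a) * ((1 - u - a) + (u^2 + u*a + a^2)) \<ge> 0" using h
    by (intro mult_nonneg_nonneg add_nonneg_nonneg) auto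
  ultimately show ?thesis by linarith
qed

lemma g2_mono: "0 \<le> u \<Longrightarrow> u \<le> c \<Longrightarrow> u + c \<le> 2 \<Longrightarrow> u - u^2/2 \<le> c - (c::real)^2/2"
proof -
  assume h: "0 \<le> u" "u \<le> c" "u + c \<le> 2"
  have "c - c^2/2 - (u - u^2/2) = (c - u) * (2 - c - u) / 2" by (simp add: power2_eq_square field_simps)
  moreover have "(c - u) * (2 - c - u) \<ge> 0" using h by (intro mult_nonneg_nonneg) auto
  ultimately show ?thesis by simp
qed

lemma lo_arith: "0 < (x::real) \<Longrightarrow> 1/(x+1) \<le> 1/x - (1/x)^2 + (1/x)^3"
proof -
  assume x: "0 < x"
  have "1/x - (1/x)^2 + (1/x)^3 = (x^2 - x + 1)/x^3" using x
    by (simp add: power2_eq_square power3_eq_cube field_simps)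
  moreover have "1/(x+1) \<le> (x^2 - x + 1)/x^3"
  proof -
    have "x^3 \<le> (x^2 - x + 1) * (x + 1)" by (simp add: power2_eq_square power3_eq_cube algebra_simps)
    then show ?thesis using x by (simp add: divide_simps)
  qed
  ultimately show ?thesis by simp
qed

lemma hi_arith: "0 < (x::real) \<Longrightarrow> 2/x - (2/x)^2/2 \<le> 2/(x+1)"
proof -
  assume x: "0 < x"
  have "2/x - (2/x)^2/2 = 2*(x-1)/x^2" using x by (simp add: power2_eq_square field_simps)
  moreover have "2*(x-1)/x^2 \<le> 2/(x+1)"
  proof -
    have "(2*x-2)*(x+1) \<le> 2*x^2" by (simp add: power2_eq_square algebra_simps)
    then show ?thesis using x by (simp add: divide_simps)
  qed
  ultimately show ?thesis by simp
qed

lemma u_bounds: "1/(real n + 2) \<le> 1 - rr n \<and> 1 - rr n \<le> 2/(real n + 4)"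
proof (induction n)
  case 0 then show ?case by simp
next
  case (Suc n)
  define u where "u = 1 - rr n"
  have lo: "1/(real n + 2) \<le> u" and hi: "u \<le> 2/(real n + 4)" using Suc u_def by auto
  have hi2: "2/(real n + 4) \<le> 1/2" by (simp add: field_simps)
  have u0: "0 \<le> u" using lo by (smt (verit) divide_nonneg_nonneg of_nat_0_le_iff)
  have e: "1 - rr (Suc n) = u - (1 - u) * u^2"
    using u_step[of u] by (simp add: u_def)
  have a: "u - u^2 + u^3 = u - (1 - u) * u^2" by algebra
  have b: "u - (1 - u) * u^2 \<le> u - u^2/2"
  proof -
    have "u \<le> 1/2" using hi hi2 by linarith
    then have "1/2 * u^2 \<le> (1-u)*u^2" by (intro mult_right_mono) auto
    then show ?thesis by simp
  qed
  have "1/(real n + 2) - (1/(real n + 2))^2 + (1/(real n + 2))^3 \<le> u - u^2 + u^3"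
  proof (rule g_mono)
    show "0 \<le> 1/(real n + 2)" by simp
    show "1/(real n + 2) \<le> u" by (rule lo)
    have "1/(real n + 2) \<le> 1/2" by (simp add: field_simps)
    then show "u + 1/(real n + 2) \<le> 1" using hi hi2 by linarith
  qed
  moreover have "1/(real n + 2 + 1) \<le> 1/(real n + 2) - (1/(real n + 2))^2 + (1/(real n + 2))^3" by (intro lo_arith) simp
  moreover have "u - u^2/2 \<le> 2/(real n + 4) - (2/(real n + 4))^2/2"
    by (rule g2_mono) (use u0 hi hi2 in linarith)+
  moreover have "2/(real n + 4) - (2/(real n + 4))^2/2 \<le> 2/(real n + 4 + 1)" by (intro hi_arith) simp
  ultimately show ?case using a b e
    by (simp add: add.commute add.left_commute)
qed



lemma rr_bnd: "1/2 \<le> rr n \<and> rr n < 1"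
proof -
  have a: "1/(real n + 2) \<le> 1 - rr n" "1 - rr n \<le> 2/(real n + 4)" using u_bounds[of n] by auto
  have "0 < 1/(real n + 2)" by simp
  moreover have "2/(real n + 4) \<le> 1/2" by (simp add: field_simps)
  ultimately show ?thesis using a by linarith
qed

lemma rr_lim: "rr \<longlonglongrightarrow> 1"
proof -
  have "(\<lambda>n. 1 - rr n) \<longlonglongrightarrow> 0"
  proof (rule Lim_null_comparison)
    show "\<forall>\<^sub>F n in sequentially. norm (1 - rr n) \<le> 2 * inverse (real (Suc n))"
    proof (rule always_eventually, rule allI)
      fix n
      have "norm (1 - rr n) = 1 - rr n" using rr_bnd[of n] by simp
      also have "\<dots> \<le> 2/(real n + 4)" using u_bounds[of n] by simp
      also have "\<dots> \<le> 2 * inverse (real (Suc n))" by (simp add: field_simps)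
      finally show "norm (1 - rr n) \<le> 2 * inverse (real (Suc n))" .
    qed
    show "(\<lambda>n. 2 * inverse (real (Suc n))) \<longlonglongrightarrow> 0"
      using tendsto_mult_right_zero[OF LIMSEQ_inverse_real_of_nat, of 2] by simp
  qed
  then have "(\<lambda>n. 1 - (1 - rr n)) \<longlonglongrightarrow> 1 - 0" by (intro tendsto_intros)
  then show ?thesis by simp
qed

lemma SS_mono: "incseq SS"
proof (rule incseq_SucI)
  fix n show "SS n \<le> SS (Suc n)" using rr_bnd[of "Suc n"] by (simp only: SS.simps) linarith
qed

lemma SS_ln: "ln (real n + 3) - ln 3 \<le> SS n"
proof (induction n)
  case 0 then show ?case by simp
next
  case (Suc n)
  have "1 + 1/(real n+3) = (real n + 4)/(real n + 3)" by (simp add: field_simps)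
  then have "ln (real n + 4) - ln (real n + 3) = ln (1 + 1/(real n + 3))" by (simp add: ln_div)
  also have "\<dots> \<le> 1/(real n + 3)" by (rule ln_add_one_self_le_self) simp
  also have "\<dots> \<le> 1 - rr (Suc n)" using u_bounds[of "Suc n"] by (simp add: add.commute)
  finally show ?case using Suc by (simp add: add.commute add.left_commute)
qed

lemma SS_unb: "\<exists>n. T \<le> SS n"
proof -
  define n where "n = nat \<lceil>exp (T + ln 3)\<rceil>"
  have "exp (T + ln 3) \<le> real n" unfolding n_def by (rule real_nat_ceiling_ge)
  then have "exp (T + ln 3) \<le> real n + 3" by simp
  then have "T + ln 3 \<le> ln (real n + 3)"
    using ln_le_cancel_iff[of "exp (T + ln 3)" "real n + 3"] by simp
  then show ?thesis using SS_ln[of n] by (intro exI[of _ n]) linarith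
qed

lemma approx:
  assumes "0 < e"
  shows "\<exists>n\<ge>M. \<exists>N::int. \<bar>SS n - (t + 2*pi * of_int N)\<bar> < e"
proof -
  define K where "K = max M (nat \<lceil>2/e\<rceil>)"
  have Kge: "2/e \<le> real K"
  proof -
    have "2/e \<le> real (nat \<lceil>2/e\<rceil>)" by (rule real_nat_ceiling_ge)
    moreover have "nat \<lceil>2/e\<rceil> \<le> K" by (simp add: K_def)
    ultimately show ?thesis by (meson of_nat_le_iff order_trans)
  qed
  have Kp: "0 < real K" using Kge assms by (meson divide_pos_pos less_le_trans zero_less_numeral)
  have Ke: "2 \<le> e * real K" using Kge assms by (simp add: pos_divide_le_eq mult.commute)
  have small: "1 - rr (Suc p) < e" if "K \<le> p" for p
  proof -
    have "1 - rr (Suc p) \<le> 2/(real (Suc p) + 4)" using u_bounds[of "Suc p"] by simp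
    also have "\<dots> < 2/(real K)"
    proof -
      have "real K < real (Suc p) + 4" using that by simp
      then show ?thesis using Kp by (simp add: frac_less2)
    qed
    also have "\<dots> \<le> e" using Kp Ke by (simp add: pos_divide_le_eq mult.commute)
    finally show ?thesis .
  qed
  define x where "x = (SS K - t)/(2*pi)"
  define N :: int where "N = \<lceil>x\<rceil> + 1"
  define tau where "tau = t + 2*pi * of_int N"
  have "x \<le> of_int \<lceil>x\<rceil>" by (rule le_of_int_ceiling)
  then have "x < of_int N" unfolding N_def by linarith
  then have "SS K - t < of_int N * (2*pi)" unfolding x_def using pi_gt_zero
    by (simp add: pos_divide_less_eq)
  then have K_lt: "SS K < tau" unfolding tau_def by (simp add: mult.commute)
  obtain n0 where n0: "tau \<le> SS n0" using SS_unb by blast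
  define n where "n = (LEAST n. tau \<le> SS n)"
  have n1: "tau \<le> SS n" unfolding n_def using n0 by (rule LeastI)
  have nK: "K < n"
  proof (rule ccontr)
    assume "\<not> K < n"
    then have "SS n \<le> SS K" using SS_mono by (simp add: incseq_def)
    then show False using n1 K_lt by linarith
  qed
  then obtain p where p: "n = Suc p" "K \<le> p" by (cases n) auto
  have "p < n" using p by simp
  then have "\<not> tau \<le> SS p" unfolding n_def by (rule not_less_Least)
  moreover have "SS n = SS p + (1 - rr (Suc p))" using p(1) by (simp only: SS.simps)
  ultimately have "SS n < tau + e" using small[OF p(2)] by linarith
  then have "\<bar>SS n - tau\<bar> < e" using n1 assms by linarith
  moreover have "M \<le> n" using nK unfolding K_def by simp
  ultimately show ?thesis unfolding tau_def by blast
qed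



lemma PP_alt: "i \<noteq> j \<Longrightarrow> PP i j r s = (r * cos s) *\<^sub>R axis i 1 + (r * sin s) *\<^sub>R axis j 1"
  by (auto simp: PP_def vec_eq_iff axis_def)

lemma PP_periodic: "PP i j r (s - 2*pi * of_int N) = PP i j r s"
proof -
  have c: "cos (s - 2*pi * of_int N) = cos s" and sn: "sin (s - 2*pi * of_int N) = sin s"
    by (simp_all add: cos_diff sin_diff)
  show ?thesis unfolding PP_def c sn ..
qed

lemma orbit: "i \<noteq> j \<Longrightarrow> (fB i j ^^ n) (PP i j (1/2) 0) = PP i j (rr n) (SS n)"
proof (induction n)
  case 0 then show ?case by simp
next
  case (Suc n)
  have "(fB i j ^^ Suc n) (PP i j (1/2) 0) = fB i j (PP i j (rr n) (SS n))" using Suc by simp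
  also have "\<dots> = PP i j (hh (rr n)) (SS n + (1 - hh (rr n)))"
    using rr_bnd[of n] Suc.prems by (intro fB_PP) auto
  finally show ?case by simp
qed

lemma sub_lim:
  assumes "i \<noteq> j"
  shows "\<exists>sel. filterlim sel at_top sequentially \<and>
     (\<lambda>k. PP i j (rr (sel k)) (SS (sel k))) \<longlonglongrightarrow> PP i j 1 t"
proof -
  have "\<forall>k. \<exists>n N. k \<le> n \<and> \<bar>SS n - (t + 2*pi * of_int (N::int))\<bar> < inverse (real (Suc k))"
    using approx by (metis inverse_positive_iff_positive of_nat_0_less_iff zero_less_Suc)
  then obtain sel Nf where sn: "\<And>k. k \<le> sel k" and
      close: "\<And>k. \<bar>SS (sel k) - (t + 2*pi * of_int (Nf k :: int))\<bar> < inverse (real (Suc k))"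
    by metis
  have sel_lim: "filterlim sel at_top sequentially"
    by (rule filterlim_at_top_mono[OF filterlim_ident]) (use sn in auto)
  define d where "d k = SS (sel k) - 2*pi * of_int (Nf k)" for k
  have "(\<lambda>k. d k - t) \<longlonglongrightarrow> 0"
  proof (rule Lim_null_comparison)
    show "\<forall>\<^sub>F k in sequentially. norm (d k - t) \<le> inverse (real (Suc k))"
      using close by (intro always_eventually allI) (auto simp: d_def algebra_simps less_imp_le)
    show "(\<lambda>k. inverse (real (Suc k))) \<longlonglongrightarrow> 0" by (rule LIMSEQ_inverse_real_of_nat)
  qed
  then have "(\<lambda>k. d k - t + t) \<longlonglongrightarrow> 0 + t" by (intro tendsto_intros)
  then have dl: "d \<longlonglongrightarrow> t" by simp
  have rl: "(\<lambda>k. rr (sel k)) \<longlonglongrightarrow> 1" by (rule filterlim_compose[OF rr_lim sel_lim])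
  have "(\<lambda>k. PP i j (rr (sel k)) (d k)) \<longlonglongrightarrow> PP i j 1 t"
    unfolding PP_alt[OF assms] by (intro tendsto_intros rl dl)
  moreover have "PP i j (rr (sel k)) (d k) = PP i j (rr (sel k)) (SS (sel k))" for k
    unfolding d_def by (rule PP_periodic)
  ultimately show ?thesis using sel_lim by auto
qed



theorem theorem1p5:
  fixes X :: "'a::metric_space set"
  assumes "compact X"
    and "CARD('n::finite) \<ge> 2"
    and "\<exists>B (h :: real^'n \<Rightarrow> 'a). free_ball X B h"
  shows "(\<exists>f g x. homeomorphism X X f g \<and> x \<in> X \<and> infinite (omega_limit f x) \<and>
                 (\<forall>y\<in>omega_limit f x. f y = y)) \<and> \<not> omega_FTP X"
proof -
  obtain B and e :: "real^'n \<Rightarrow> 'a" where fb: "free_ball X B e" using assms(3) by blast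
  then obtain e' where hom: "homeomorphism (cball 0 1) B e e'" and BX: "B \<subseteq> X"
    and op: "openin (top_of_set X) (e ` ball 0 1)"
    unfolding free_ball_def by blast
  obtain i :: 'n where True by blast
  have "UNIV - {i} \<noteq> {}"
  proof
    assume "UNIV - {i} = {}"
    then have "(UNIV :: 'n set) \<subseteq> {i}" by blast
    then have "CARD('n) \<le> card {i}" by (intro card_mono) auto
    then show False using assms(2) by simp
  qed
  then obtain j where "j \<in> UNIV - {i}" by blast
  then have ij: "i \<noteq> j" by auto
  have e'e: "\<And>v. v \<in> cball 0 1 \<Longrightarrow> e' (e v) = v" using hom by (simp add: homeomorphism_def)
  have ee': "\<And>y. y \<in> B \<Longrightarrow> e (e' y) = y" using hom by (simp add: homeomorphism_def)
  have e'B: "\<And>y. y \<in> B \<Longrightarrow> e' y \<in> cball 0 1" using hom by (auto simp: homeomorphism_def)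
  have eB: "\<And>v. v \<in> cball 0 1 \<Longrightarrow> e v \<in> B" using hom by (auto simp: homeomorphism_def)
  have ce: "continuous_on (cball 0 1) e" and ce': "continuous_on B e'"
    using hom by (auto simp: homeomorphism_def)
  have Bimg: "B = e ` cball 0 1" using hom by (simp add: homeomorphism_def)
  have cB: "compact B" unfolding Bimg by (intro compact_continuous_image ce) simp
  have fBc: "fB i j v \<in> cball 0 1" if "v \<in> cball 0 1" for v
    using fB_image[OF ij] that by blast
  define F where "F x = (if x \<in> B then e (fB i j (e' x)) else x)" for x
  have agree: "e (fB i j (e' x)) = x" if "x \<in> B" "x \<notin> e ` ball 0 1" for x
  proof -
    have "e' x \<in> cball 0 1" using e'B that by blast
    moreover have "e' x \<notin> ball 0 1" using that ee' by (metis image_eqI)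
    ultimately have "norm (e' x) = 1" by (simp add: mem_cball_0 mem_ball_0)
    then have "fB i j (e' x) = e' x" by (rule fB_fix)
    then show ?thesis using ee' that by simp
  qed
  have "e ` ball 0 1 \<subseteq> B" using eB by auto
  then have XU: "X = B \<union> (X - e ` ball 0 1)" using BX by auto
  have contF: "continuous_on X F"
  proof -
    have "continuous_on (B \<union> (X - e ` ball 0 1)) (\<lambda>x. if x \<in> B then e (fB i j (e' x)) else x)"
    proof (rule continuous_on_cases_local)
      show "closedin (top_of_set (B \<union> (X - e ` ball 0 1))) B"
        by (rule closed_subset) (auto intro: compact_imp_closed cB)
      show "closedin (top_of_set (B \<union> (X - e ` ball 0 1))) (X - e ` ball 0 1)"
        unfolding XU[symmetric] by (intro closedin_diff op) (simp add: closedin_subtopology_refl)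
      show "continuous_on B (\<lambda>x. e (fB i j (e' x)))"
      proof (rule continuous_on_compose2[OF ce])
        show "continuous_on B (\<lambda>x. fB i j (e' x))"
          by (rule continuous_on_compose2[OF continuous_fB ce']) auto
        show "(\<lambda>x. fB i j (e' x)) ` B \<subseteq> cball 0 1" using fBc e'B by blast
      qed
      show "continuous_on (X - e ` ball 0 1) (\<lambda>x. x)" by (rule continuous_on_id)
      show "e (fB i j (e' x)) = x" if "x \<in> B \<and> x \<notin> B \<or> x \<in> X - e ` ball 0 1 \<and> x \<in> B" for x
        using that agree by blast
    qed
    then show ?thesis unfolding F_def[abs_def] XU[symmetric] .
  qed
  have FB: "F x \<in> B" if "x \<in> B" for x using that fBc e'B eB by (simp add: F_def)
  have injF: "inj_on F X"
  proof
    fix x y assume x: "x \<in> X" and y: "y \<in> X" and eq: "F x = F y"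
    show "x = y"
    proof (cases "x \<in> B"; cases "y \<in> B")
      assume xb: "x \<in> B" and yb: "y \<in> B"
      then have "e (fB i j (e' x)) = e (fB i j (e' y))" using eq by (simp add: F_def)
      then have "e' (e (fB i j (e' x))) = e' (e (fB i j (e' y)))" by simp
      then have "fB i j (e' x) = fB i j (e' y)" using e'e[OF fBc[OF e'B[OF xb]]] e'e[OF fBc[OF e'B[OF yb]]] by simp
      then have "e' x = e' y" using fB_inj[OF ij] e'B xb yb by (meson inj_onD)
      then show "x = y" using ee' xb yb by metis
    next
      assume xb: "x \<in> B" and yb: "y \<notin> B"
      have "F x \<in> B" using FB[OF xb] .
      moreover have "F y = y" using yb by (simp add: F_def)
      ultimately show "x = y" using eq yb by simp
    next
      assume xb: "x \<notin> B" and yb: "y \<in> B"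
      have "F y \<in> B" using FB[OF yb] .
      moreover have "F x = x" using xb by (simp add: F_def)
      ultimately show "x = y" using eq xb by simp
    next
      assume "x \<notin> B" "y \<notin> B" then show "x = y" using eq by (simp add: F_def)
    qed
  qed
  have imgF: "F ` X = X"
  proof
    show "F ` X \<subseteq> X" using FB BX by (auto simp: F_def)
    show "X \<subseteq> F ` X"
    proof
      fix y assume y: "y \<in> X"
      show "y \<in> F ` X"
      proof (cases "y \<in> B")
        case True
        then have "e' y \<in> fB i j ` cball 0 1" using fB_image[OF ij] e'B by blast
        then obtain w where w: "w \<in> cball 0 1" "fB i j w = e' y" by auto
        have "F (e w) = y" using w eB e'e ee' True by (simp add: F_def)
        moreover have "e w \<in> X" using eB w BX by blast
        ultimately show ?thesis by (metis image_eqI)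
      next
        case False
        then show ?thesis using y by (metis F_def image_eqI)
      qed
    qed
  qed
  obtain G where homF: "homeomorphism X X F G"
    using homeomorphism_compact[OF assms(1) contF imgF injF] by blast
  define x0 where "x0 = e (PP i j (1/2) 0)"
  have p0: "PP i j (1/2) 0 \<in> cball 0 1" using ij by (simp add: mem_cball_0 norm_PP)
  have x0X: "x0 \<in> X" using eB p0 BX x0_def by blast
  have PPc: "PP i j (rr n) (SS n) \<in> cball 0 1" for n
    using ij rr_bnd[of n] by (simp add: mem_cball_0 norm_PP)
  have iter: "(F ^^ n) x0 = e (PP i j (rr n) (SS n))" for n
  proof (induction n)
    case 0 then show ?case by (simp add: x0_def)
  next
    case (Suc n)
    have "(F ^^ Suc n) x0 = F (e (PP i j (rr n) (SS n)))" using Suc by simp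
    also have "\<dots> = e (fB i j (PP i j (rr n) (SS n)))"
      using PPc[of n] eB e'e by (simp add: F_def)
    also have "fB i j (PP i j (rr n) (SS n)) = (fB i j ^^ Suc n) (PP i j (1/2) 0)"
      using orbit[OF ij, of n] by simp
    also have "\<dots> = PP i j (rr (Suc n)) (SS (Suc n))" by (rule orbit[OF ij])
    finally show ?case .
  qed
  have in_om: "e (PP i j 1 t) \<in> omega_limit F x0" for t
  proof -
    obtain sel where sel: "filterlim sel at_top sequentially"
      and lim: "(\<lambda>k. PP i j (rr (sel k)) (SS (sel k))) \<longlonglongrightarrow> PP i j 1 t"
      using sub_lim[OF ij] by blast
    have "(\<lambda>k. e (PP i j (rr (sel k)) (SS (sel k)))) \<longlonglongrightarrow> e (PP i j 1 t)"
      using continuous_on_tendsto_compose[OF ce lim] PPc ij by (simp add: mem_cball_0 norm_PP)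
    then show ?thesis unfolding omega_limit_def iter using sel by blast
  qed
  have fixed: "F y = y" if yom: "y \<in> omega_limit F x0" for y
  proof -
    obtain sel where sel: "filterlim sel at_top sequentially"
      and lim: "(\<lambda>k. (F ^^ sel k) x0) \<longlonglongrightarrow> y"
      using yom unfolding omega_limit_def by blast
    have lim2: "(\<lambda>k. e (PP i j (rr (sel k)) (SS (sel k)))) \<longlonglongrightarrow> y" using lim by (simp add: iter)
    have yB: "y \<in> B"
      using closed_sequentially[OF compact_imp_closed[OF cB] _ lim2] eB PPc by blast
    have "(\<lambda>k. e' (e (PP i j (rr (sel k)) (SS (sel k))))) \<longlonglongrightarrow> e' y"
      using continuous_on_tendsto_compose[OF ce' lim2 yB] eB PPc by (simp add: comp_def)
    then have "(\<lambda>k. PP i j (rr (sel k)) (SS (sel k))) \<longlonglongrightarrow> e' y" using e'e PPc by simp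
    then have "(\<lambda>k. norm (PP i j (rr (sel k)) (SS (sel k)))) \<longlonglongrightarrow> norm (e' y)"
      by (rule tendsto_norm)
    moreover have "(\<lambda>k. norm (PP i j (rr (sel k)) (SS (sel k)))) = (\<lambda>k. rr (sel k))"
    proof
      fix k show "norm (PP i j (rr (sel k)) (SS (sel k))) = rr (sel k)"
        using ij rr_bnd[of "sel k"] by (simp add: norm_PP)
    qed
    moreover have "(\<lambda>k. rr (sel k)) \<longlonglongrightarrow> 1" by (rule filterlim_compose[OF rr_lim sel])
    ultimately have "norm (e' y) = 1" using LIMSEQ_unique[of "\<lambda>k. rr (sel k)" "norm (e' y)" 1] by simp
    then have "fB i j (e' y) = e' y" by (rule fB_fix)
    then show "F y = y" using yB ee' by (simp add: F_def)
  qed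
  have inf: "infinite (omega_limit F x0)"
  proof
    assume fin: "finite (omega_limit F x0)"
    have sub: "(\<lambda>t. e (PP i j 1 t)) ` {0..1} \<subseteq> omega_limit F x0" using in_om by blast
    have "inj_on (\<lambda>t. e (PP i j 1 t)) {0..1}"
    proof
      fix s t :: real assume s: "s \<in> {0..1}" and t: "t \<in> {0..1}"
        and eq: "e (PP i j 1 s) = e (PP i j 1 t)"
      have "PP i j 1 s \<in> cball 0 1" "PP i j 1 t \<in> cball 0 1" using ij by (auto simp: mem_cball_0 norm_PP)
      then have "PP i j 1 s = PP i j 1 t" using eq e'e by metis
      then have "PP i j 1 s $ i = PP i j 1 t $ i" by simp
      then have "cos s = cos t" by (simp add: PP_def)
      then show "s = t" using cos_inj_pi[of s t] s t pi_gt3 by auto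
    qed
    then have "infinite ((\<lambda>t. e (PP i j 1 t)) ` {0..1::real})"
      using finite_imageD[of "\<lambda>t. e (PP i j 1 t)" "{0..1::real}"] infinite_Icc[of "0::real" 1] by auto
    then show False using fin sub finite_subset by blast
  qed
  have part1: "\<exists>f g x. homeomorphism X X f g \<and> x \<in> X \<and> infinite (omega_limit f x) \<and>
                 (\<forall>y\<in>omega_limit f x. f y = y)"
    using homF x0X inf fixed by blast
  have "\<not> omega_FTP X"
  proof
    assume "omega_FTP X"
    moreover have "continuous_on X F \<and> F ` X \<subseteq> X" using contF imgF by simp
    ultimately have "totally_periodic F (omega_limit F x0) \<longrightarrow> finite (omega_limit F x0)"
      using x0X unfolding omega_FTP_def by blast
    moreover have "totally_periodic F (omega_limit F x0)"
      unfolding totally_periodic_def periodic_point_def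
      using fixed by (auto intro!: exI[of _ 1])
    ultimately show False using inf by blast
  qed
  with part1 show ?thesis by blast
qed

end
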